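(* Let $q\ge2$, $n\ge2$, $m=n-1$ and $R\in[m]$. Then $$\min_{{\boldsymbol y}\in\Sigma_{q,R}^m}\mathsf{H}^{\mathsf{In}}_{1\text{-}\mathsf{Del}}({\boldsymbol y})=\log_2(nq)-\frac{(m-R+2)\log_2(m-R+2)+2(R-1)}{nq},$$ and the minimum is attained only by skewed channel outputs.
   Context: $\Sigma_q=\{0,\dots,q-1\}$. For sequences ${\boldsymbol x}$ of length $N$ and ${\boldsymbol y}$ of length $\ell\le N$, $\omega_{{\boldsymbol y}}({\boldsymbol x})$ is the number of index tuples $1\le i_1<\dots<i_\ell\le N$ with $x_{i_j}=y_j$. The $1$-deletion channel with input length $n$ maps ${\boldsymbol x}\in\Sigma_q^n$ to ${\boldsymbol y}\in\Sigma_q^{n-1}$ with probability $\omega_{{\boldsymbol y}}({\boldsymbol x})/n$; under uniform transmission ($X$ uniform on $\Sigma_q^n$), $\mathsf{H}^{\mathsf{In}}_{1\text{-}\mathsf{Del}}({\boldsymbol y})=H(X\mid Y={\boldsymbol y})$ in bits, with posterior $P({\boldsymbol x}\mid {\boldsymbol y})=\Pr\{{\boldsymbol y}\mid{\boldsymbol x}\}/\sum_{{\boldsymbol x}'}\Pr\{{\boldsymbol y}\mid{\boldsymbol x}'\}$. A run is a maximal block of identical consecutive symbols; $\Sigma_{q,R}^m$ is the set of sequences in $\Sigma_q^m$ with exactly $R$ runs. A sequence in $\Sigma_{q,R}^m$ is skewed if it has $R-1$ runs of length one and one run of length $m-(R-1)$. *)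

theory Defs
  imports Main "HOL-Library.Multiset" Complex_Main
begin

definition seqs :: "nat \<Rightarrow> nat \<Rightarrow> nat list set" where
  "seqs q n = {xs. length xs = n \<and> set xs \<subseteq> {..<q}}"

definition omega :: "nat list \<Rightarrow> nat list \<Rightarrow> nat" where
  "omega y x = card {I. I \<subseteq> {..<length x} \<and> card I = length y \<and> nths x I = y}"

text \<open>1-deletion channel with input length n: Pr{y | x} = omega_y(x) / n.\<close>
definition del_prob :: "nat \<Rightarrow> nat list \<Rightarrow> nat list \<Rightarrow> real" where
  "del_prob n y x = real (omega y x) / real n"

text \<open>Posterior P(x | y) under uniform input on Sigma_q^n.\<close>
definition posterior :: "nat \<Rightarrow> nat \<Rightarrow> nat list \<Rightarrow> nat list \<Rightarrow> real" where
  "posterior q n y x = del_prob n y x / (\<Sum>x'\<in>seqs q n. del_prob n y x')"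

definition H_in_1del :: "nat \<Rightarrow> nat \<Rightarrow> nat list \<Rightarrow> real" where
  "H_in_1del q n y = - (\<Sum>x\<in>seqs q n.
      (if posterior q n y x = 0 then 0
       else posterior q n y x * log 2 (posterior q n y x)))"

fun runs :: "'a list \<Rightarrow> 'a list list" where
  "runs [] = []"
| "runs (x # xs) = (case runs xs of
       [] \<Rightarrow> [[x]]
     | r # rs \<Rightarrow> (if hd r = x then (x # r) # rs else [x] # r # rs))"

definition seqs_runs :: "nat \<Rightarrow> nat \<Rightarrow> nat \<Rightarrow> nat list set" where
  "seqs_runs q R m = {y \<in> seqs q m. length (runs y) = R}"

definition skewed :: "nat \<Rightarrow> nat list \<Rightarrow> bool" where
  "skewed R y = (mset (map length (runs y)) =
       replicate_mset (R - 1) 1 + {# length y - (R - 1) #})"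

end

theory Submission imports Defs begin

lemma omega_Nil: "omega [] x = 1"
proof -
  have "{I. I \<subseteq> {..<length x} \<and> card I = length ([]::nat list) \<and> nths x I = []} = {{}}"
  proof (rule set_eqI, rule iffI)
    fix I assume "I \<in> {I. I \<subseteq> {..<length x} \<and> card I = length ([]::nat list) \<and> nths x I = []}"
    then have "I \<subseteq> {..<length x}" "card I = 0" by auto
    then have "I = {}" using finite_subset by fastforce
    then show "I \<in> {{}}" by simp
  qed auto
  then show ?thesis unfolding omega_def by simp
qed

lemma omega_long: "length x < length y \<Longrightarrow> omega y x = 0"
proof -
  assume a: "length x < length y"
  have "{I. I \<subseteq> {..<length x} \<and> card I = length y \<and> nths x I = y} = {}"
  proof (rule ccontr)
    assume "{I. I \<subseteq> {..<length x} \<and> card I = length y \<and> nths x I = y} \<noteq> {}"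
    then obtain I where "I \<subseteq> {..<length x}" "card I = length y" by auto
    then have "card I \<le> length x" using card_mono[of "{..<length x}" I] by simp
    with a \<open>card I = length y\<close> show False by simp
  qed
  then show ?thesis unfolding omega_def by simp
qed

definition shift :: "nat set \<Rightarrow> nat set" where "shift I = {j. Suc j \<in> I}"

lemma shift_Suc[simp]: "shift (Suc ` J) = J" unfolding shift_def by auto
lemma shift_ins[simp]: "shift (insert 0 (Suc ` J)) = J" unfolding shift_def by auto
lemma no0: "0 \<notin> I \<Longrightarrow> I = Suc ` shift I"
  unfolding shift_def by (auto simp: image_iff) (metis not0_implies_Suc)
lemma yes0: "0 \<in> I \<Longrightarrow> I = insert 0 (Suc ` shift I)"
  unfolding shift_def by (auto simp: image_iff) (metis not0_implies_Suc)

lemma omega_Cons: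
  "omega (a#ys) (b#xs) = omega (a#ys) xs + (if a = b then omega ys xs else 0)"
proof -
  define A where "A = {I. I \<subseteq> {..<length (b#xs)} \<and> card I = length (a#ys) \<and> nths (b#xs) I = a#ys}"
  define A0 where "A0 = {I\<in>A. 0 \<notin> I}"
  define A1 where "A1 = {I\<in>A. 0 \<in> I}"
  define B0 where "B0 = {I. I \<subseteq> {..<length xs} \<and> card I = length (a#ys) \<and> nths xs I = a#ys}"
  define B1 where "B1 = {I. I \<subseteq> {..<length xs} \<and> card I = length ys \<and> nths xs I = ys}"
  have finA: "finite A" unfolding A_def
    by (rule finite_subset[of _ "Pow {..<length (b#xs)}"]) auto
  have AU: "A = A0 \<union> A1" "A0 \<inter> A1 = {}" unfolding A0_def A1_def by auto
  have cA: "card A = card A0 + card A1"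
    using AU finA by (metis card_Un_disjoint finite_Un)
  have A0eq: "A0 = image ((`) Suc) B0"
  proof (rule set_eqI, rule iffI)
    fix I assume I: "I \<in> A0"
    then have "0 \<notin> I" unfolding A0_def by auto
    then have Ie: "I = Suc ` shift I" by (rule no0)
    have fin: "finite I" using I unfolding A0_def A_def using finite_subset by blast
    have "shift I \<in> B0"
    proof -
      have "card (shift I) = card I" using Ie card_image[of Suc "shift I"] by simp
      moreover have "nths xs (shift I) = nths (b#xs) I"
        using \<open>0 \<notin> I\<close> by (simp add: nths_Cons shift_def)
      moreover have "shift I \<subseteq> {..<length xs}" using I unfolding A0_def A_def shift_def by auto
      ultimately show ?thesis using I unfolding A0_def A_def B0_def by auto
    qed
    then show "I \<in> image ((`) Suc) B0" using Ie by blast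
  next
    fix I assume "I \<in> image ((`) Suc) B0"
    then obtain J where J: "J \<in> B0" "I = Suc ` J" by auto
    have "card I = card J" using J card_image[of Suc J] by simp
    moreover have "nths (b#xs) I = nths xs J" using J by (simp add: nths_Cons shift_Suc[unfolded shift_def])
    ultimately show "I \<in> A0" using J unfolding A0_def A_def B0_def by auto
  qed
  have c0: "card A0 = card B0" unfolding A0eq
    by (rule card_image, rule inj_on_inverseI[of _ shift]) simp
  have c1: "card A1 = (if a = b then card B1 else 0)"
  proof (cases "a = b")
    case True
    have A1eq: "A1 = image (\<lambda>J. insert 0 (Suc ` J)) B1"
    proof (rule set_eqI, rule iffI)
      fix I assume I: "I \<in> A1"
      then have "0 \<in> I" unfolding A1_def by auto
      then have Ie: "I = insert 0 (Suc ` shift I)" by (rule yes0)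
      have fin: "finite I" using I unfolding A1_def A_def using finite_subset by blast
      have fs: "finite (shift I)" using fin Ie by (metis finite_imageD finite_insert inj_Suc inj_on_subset subset_UNIV)
      have "shift I \<in> B1"
      proof -
        have "card I = Suc (card (shift I))" using Ie fs
          by (metis card_image card_insert_disjoint finite_imageI imageE inj_Suc inj_on_subset nat.distinct(1) subset_UNIV)
        moreover have "nths (b#xs) I = b # nths xs (shift I)" using \<open>0 \<in> I\<close>
          by (simp add: nths_Cons shift_def)
        moreover have "shift I \<subseteq> {..<length xs}" using I unfolding A1_def A_def shift_def by auto
        ultimately show ?thesis using I unfolding A1_def A_def B1_def by auto
      qed
      then show "I \<in> image (\<lambda>J. insert 0 (Suc ` J)) B1" using Ie by blast
    next
      fix I assume "I \<in> image (\<lambda>J. insert 0 (Suc ` J)) B1"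
      then obtain J where J: "J \<in> B1" "I = insert 0 (Suc ` J)" by auto
      have fJ: "finite J" using J unfolding B1_def using finite_subset by blast
      have "card I = Suc (card J)" using J fJ card_image[of Suc J] by auto
      moreover have "nths (b#xs) I = b # nths xs J" using J by (simp add: nths_Cons shift_Suc[unfolded shift_def])
      ultimately show "I \<in> A1" using J True unfolding A1_def A_def B1_def by auto
    qed
    have "card A1 = card B1" unfolding A1eq
      by (rule card_image, rule inj_on_inverseI[of _ shift]) simp
    then show ?thesis using True by simp
  next
    case False
    have "A1 = {}"
    proof (rule ccontr)
      assume "A1 \<noteq> {}"
      then obtain I where "I \<in> A1" by auto
      then have "0 \<in> I" "nths (b#xs) I = a#ys" unfolding A1_def A_def by auto
      then show False using False by (simp add: nths_Cons)
    qed
    then show ?thesis using False by simp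
  qed
  show ?thesis unfolding omega_def using cA c0 c1 unfolding A_def B0_def B1_def by simp
qed

lemma omega_eq_len: "length x = length y \<Longrightarrow> omega y x = (if x = y then 1 else 0)"
proof (induction x arbitrary: y)
  case Nil then show ?case by (simp add: omega_Nil)
next
  case (Cons b xs)
  then obtain a ys where y: "y = a # ys" by (cases y) auto
  then show ?case using Cons.IH[of ys] Cons.prems by (auto simp: omega_Cons omega_long)
qed

lemma omega_self_Cons: "omega ys (a#ys) = 1 + length (takeWhile (\<lambda>x. x = a) ys)"
proof (induction ys)
  case Nil then show ?case by (simp add: omega_Nil)
next
  case (Cons c ys)
  then show ?case by (simp add: omega_Cons omega_eq_len omega_long)
qed


lemma finite_seqs: "finite (seqs q k)"
proof -
  have "seqs q k = {xs. set xs \<subseteq> {..<q} \<and> length xs = k}" unfolding seqs_def by auto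
  then show ?thesis using finite_lists_length_eq[of "{..<q}" k] by simp
qed

lemma seqs_0: "seqs q 0 = {[]}" unfolding seqs_def by auto

lemma sum_seqs_Suc:
  "(\<Sum>x\<in>seqs q (Suc k). g x) = (\<Sum>b<q. \<Sum>xs\<in>seqs q k. g (b#xs))"
proof -
  have e: "seqs q (Suc k) = (\<lambda>(b,xs). b#xs) ` ({..<q} \<times> seqs q k)"
    unfolding seqs_def by (auto simp: length_Suc_conv image_iff)
  have i: "inj_on (\<lambda>(b,xs). b#xs) ({..<q} \<times> seqs q k)" by (auto simp: inj_on_def)
  have "(\<Sum>x\<in>seqs q (Suc k). g x) = (\<Sum>(b,xs)\<in>{..<q} \<times> seqs q k. g (b#xs))"
    unfolding e by (subst sum.reindex[OF i]) (simp add: case_prod_unfold)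
  also have "\<dots> = (\<Sum>b<q. \<Sum>xs\<in>seqs q k. g (b#xs))"
    by (simp add: sum.cartesian_product)
  finally show ?thesis .
qed

lemma omega_Cons_len: "length xs = Suc (length ys) \<Longrightarrow>
  omega (a#ys) (b#xs) = (if xs = a#ys then 1 else 0) + (if a = b then omega ys xs else 0)"
  by (simp add: omega_Cons omega_eq_len)

lemma sum_if_const: "(\<Sum>x\<in>S. if P then f x else 0) = (if P then sum f S else 0)"
  by auto

lemma T_sum: "set y \<subseteq> {..<q} \<Longrightarrow>
  (\<Sum>x\<in>seqs q (Suc (length y)). real (omega y x)) = real q * real (Suc (length y))"
proof (induction y)
  case Nil
  then show ?case by (subst sum_seqs_Suc) (simp add: seqs_0 omega_Nil)
next
  case (Cons a ys)
  have ya: "a#ys \<in> seqs q (Suc (length ys))" "a < q" using Cons.prems unfolding seqs_def by auto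
  have "(\<Sum>x\<in>seqs q (Suc (length (a#ys))). real (omega (a#ys) x))
     = (\<Sum>b<q. \<Sum>xs\<in>seqs q (Suc (length ys)).
          (if xs = a#ys then 1 else 0) + (if a = b then real (omega ys xs) else 0))"
    unfolding length_Cons
    by (subst sum_seqs_Suc) (intro sum.cong refl, simp add: omega_Cons_len seqs_def)
  also have "\<dots> = (\<Sum>b<q. 1 + (if a = b then real q * real (Suc (length ys)) else 0))"
    using Cons.IH Cons.prems ya by (simp add: sum.distrib finite_seqs sum.delta sum_if_const)
  also have "\<dots> = real q + real q * real (Suc (length ys))"
    using ya by (simp add: sum.distrib)
  finally show ?case by (simp add: algebra_simps)
qed

definition hf :: "nat \<Rightarrow> real" where "hf t = real t * log 2 (real t)"

lemma hf01[simp]: "hf 0 = 0" "hf 1 = 0" "hf (Suc 0) = 0" unfolding hf_def by auto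

definition RS :: "nat list \<Rightarrow> real" where
  "RS y = sum_list (map (\<lambda>r. hf (Suc (length r))) (runs y))"

lemma runs_hd: "ys \<noteq> [] \<Longrightarrow> \<exists>rs. runs ys = takeWhile (\<lambda>x. x = hd ys) ys # rs"
proof (induction ys)
  case Nil then show ?case by simp
next
  case (Cons c ys)
  show ?case
  proof (cases "ys = []")
    case True then show ?thesis by simp
  next
    case False
    then obtain rs where r: "runs ys = takeWhile (\<lambda>x. x = hd ys) ys # rs" using Cons.IH by auto
    have h: "hd (takeWhile (\<lambda>x. x = hd ys) ys) = hd ys" using False by (cases ys) auto
    show ?thesis
    proof (cases "hd ys = c")
      case True then show ?thesis using r h False by (cases ys) auto
    next
      case F: False then show ?thesis using r h False by (cases ys) auto
    qed
  qed
qed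

lemma RS_Cons: "RS (a#ys) = RS ys + hf (length (takeWhile (\<lambda>x. x = a) ys) + 2)
   - hf (length (takeWhile (\<lambda>x. x = a) ys) + 1)"
proof (cases ys)
  case Nil then show ?thesis by (simp add: RS_def numeral_2_eq_2)
next
  case (Cons c ys')
  then obtain rs where r: "runs ys = takeWhile (\<lambda>x. x = c) ys # rs" using runs_hd[of ys] by auto
  show ?thesis
  proof (cases "c = a")
    case True then show ?thesis using r Cons by (simp add: RS_def numeral_2_eq_2)
  next
    case False then show ?thesis using r Cons by (simp add: RS_def numeral_2_eq_2)
  qed
qed

lemma S_sum: "set y \<subseteq> {..<q} \<Longrightarrow>
  (\<Sum>x\<in>seqs q (Suc (length y)). hf (omega y x)) = RS y"
proof (induction y)
  case Nil
  then show ?case by (simp add: sum_seqs_Suc seqs_0 omega_Nil RS_def)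
next
  case (Cons a ys)
  have ya: "a#ys \<in> seqs q (Suc (length ys))" "a < q" using Cons.prems unfolding seqs_def by auto
  define k where "k = length (takeWhile (\<lambda>x. x = a) ys)"
  define D where "D = hf (k + 2) - hf (k+1)"
  have om: "omega ys (a#ys) = k + 1" unfolding k_def by (simp add: omega_self_Cons)
  have inner: "hf ((if xs = a#ys then 1 else 0) + (if a = b then omega ys xs else 0))
     = (if a = b then hf (omega ys xs) + (if xs = a#ys then D else 0) else 0)" for b xs
    using om unfolding D_def by (auto simp: add.commute)
  have "(\<Sum>x\<in>seqs q (Suc (length (a#ys))). hf (omega (a#ys) x))
     = (\<Sum>b<q. \<Sum>xs\<in>seqs q (Suc (length ys)).
          hf ((if xs = a#ys then 1 else 0) + (if a = b then omega ys xs else 0)))"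
    unfolding length_Cons
    by (subst sum_seqs_Suc) (intro sum.cong refl, simp add: omega_Cons_len seqs_def)
  also have "\<dots> = (\<Sum>b<q. if a = b then RS ys + D else 0)"
    unfolding inner using Cons.IH Cons.prems ya
    by (intro sum.cong) (auto simp add: sum.distrib finite_seqs sum.delta)
  also have "\<dots> = RS ys + D" using ya by simp
  finally show ?case unfolding D_def k_def by (simp add: RS_Cons)
qed

lemma runs_sum: "sum_list (map length (runs y)) = length y"
proof (induction y)
  case (Cons a ys) then show ?case by (cases "runs ys") auto
qed simp

lemma runs_ne: "r \<in> set (runs y) \<Longrightarrow> r \<noteq> []"
proof (induction y arbitrary: r)
  case (Cons a ys) then show ?case by (cases "runs ys") (auto split: if_splits)
qed simp


lemma H_formula:
  assumes y: "set y \<subseteq> {..<q}" and q: "q \<ge> 1"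
  shows "H_in_1del q (Suc (length y)) y =
     log 2 (real (Suc (length y) * q)) - RS y / real (Suc (length y) * q)"
proof -
  define n where "n = Suc (length y)"
  define N where "N = real (n * q)"
  define w where "w x = real (omega y x)" for x
  have "0 < n*q" using q unfolding n_def by simp
  then have Npos: "N > 0" unfolding N_def by simp
  have sumw: "(\<Sum>x\<in>seqs q n. w x) = N"
    unfolding w_def N_def n_def using T_sum[OF y] by (simp add: algebra_simps)
  have post: "posterior q n y x = w x / N" for x
  proof -
    have "(\<Sum>x'\<in>seqs q n. del_prob n y x') = N / real n"
      unfolding del_prob_def using sumw unfolding w_def by (simp add: sum_divide_distrib[symmetric])
    then show ?thesis unfolding posterior_def del_prob_def w_def N_def n_def by simp
  qed
  have trm: "(if posterior q n y x = 0 then 0 else posterior q n y x * log 2 (posterior q n y x))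
     = hf (omega y x) / N - w x / N * log 2 N" for x
  proof (cases "w x = 0")
    case True then show ?thesis unfolding post hf_def w_def by simp
  next
    case False
    then have wp: "w x > 0" unfolding w_def by simp
    have L: "log 2 (w x / N) = log 2 (w x) - log 2 N" using wp Npos by (simp add: log_divide)
    have hw: "hf (omega y x) = w x * log 2 (w x)" by (simp add: hf_def w_def)
    show ?thesis unfolding post hw using False Npos L by (simp add: right_diff_distrib)
  qed
  have "H_in_1del q n y = - (\<Sum>x\<in>seqs q n. hf (omega y x) / N - w x / N * log 2 N)"
    unfolding H_in_1del_def trm by simp
  also have "\<dots> = - ((\<Sum>x\<in>seqs q n. hf (omega y x)) / N - (\<Sum>x\<in>seqs q n. w x) / N * log 2 N)"
    by (simp add: sum_subtractf sum_divide_distrib sum_distrib_right)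
  also have "\<dots> = log 2 N - RS y / N"
    using sumw Npos S_sum[OF y] unfolding n_def by simp
  finally show ?thesis unfolding n_def N_def .
qed

lemma gstep: "k \<ge> 1 \<Longrightarrow> 2 * hf (k+1) < hf k + hf (k+2)"
proof -
  assume k: "k \<ge> 1"
  define x where "x = real k"
  have x1: "x \<ge> 1" using k unfolding x_def by simp
  have l1: "ln ((x+1)/x) < (x+1)/x - 1"
  proof -
    have "ln ((x+1)/x) \<le> (x+1)/x - 1" using x1 by (intro ln_le_minus_one) simp
    moreover have "ln ((x+1)/x) \<noteq> (x+1)/x - 1"
      using ln_eq_minus_one[of "(x+1)/x"] x1 by (auto simp: field_simps)
    ultimately show ?thesis by simp
  qed
  have l2: "ln ((x+1)/(x+2)) < (x+1)/(x+2) - 1"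
  proof -
    have "ln ((x+1)/(x+2)) \<le> (x+1)/(x+2) - 1" using x1 by (intro ln_le_minus_one) simp
    moreover have "ln ((x+1)/(x+2)) \<noteq> (x+1)/(x+2) - 1"
      using ln_eq_minus_one[of "(x+1)/(x+2)"] x1 by (auto simp: field_simps)
    ultimately show ?thesis by simp
  qed
  have e1: "ln ((x+1)/x) = ln (x+1) - ln x" using x1 by (simp add: ln_div)
  have e2: "ln ((x+1)/(x+2)) = ln (x+1) - ln (x+2)" using x1 by (simp add: ln_div)
  have a1: "x * (ln (x+1) - ln x) < 1"
  proof -
    have "x * (ln (x+1) - ln x) < x * ((x+1)/x - 1)" using l1 e1 x1 by simp
    also have "\<dots> = 1" using x1 by (simp add: field_simps)
    finally show ?thesis .
  qed
  have a2: "(x+2) * (ln (x+2) - ln (x+1)) > 1"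
  proof -
    have "(x+2) * (ln (x+2) - ln (x+1)) > (x+2) * (1 - (x+1)/(x+2))" using l2 e2 x1 by simp
    moreover have "(x+2) * (1 - (x+1)/(x+2)) = 1" using x1 by (simp add: field_simps)
    ultimately show ?thesis by simp
  qed
  have main: "2 * ((x+1) * ln (x+1)) < x * ln x + (x+2) * ln (x+2)"
    using a1 a2 by (simp add: algebra_simps)
  have "2 * hf (k+1) = 2 * ((x+1) * ln (x+1)) / ln 2" unfolding hf_def x_def log_def by (simp add: add.commute)
  moreover have "hf k + hf (k+2) = (x * ln x + (x+2) * ln (x+2)) / ln 2"
    unfolding hf_def x_def log_def by (simp add: add_divide_distrib add.commute)
  ultimately show ?thesis using main by (simp add: divide_strict_right_mono)
qed

definition gg :: "nat \<Rightarrow> real" where "gg k = hf (k+1) - hf k"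

lemma gg_mono: "1 \<le> i \<Longrightarrow> i < j \<Longrightarrow> gg i < gg j"
proof -
  assume i: "1 \<le> i" and ij: "i < j"
  have sm: "gg (t+1) < gg (Suc t + 1)" for t
      using gstep[of "t+1"] unfolding gg_def by (simp add: algebra_simps)
  have "gg (Suc (i-1)) < gg (Suc (j-1))" using lift_Suc_mono_less[of "\<lambda>t. gg (t+1)", OF sm, of "i-1" "j-1"] ij i by simp
  moreover have "Suc (i-1) = i" "Suc (j-1) = j" using i ij by auto
  ultimately show ?thesis by simp
qed

lemma two_var:
  assumes b: "b \<ge> 1"
  shows "hf (a'+2) + hf (b+1) \<le> hf 2 + hf (a'+1+b) \<and>
         (a' \<ge> 1 \<and> b \<ge> 2 \<longrightarrow> hf (a'+2) + hf (b+1) < hf 2 + hf (a'+1+b))"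
proof (induction a')
  case 0 then show ?case by (simp add: add.commute numeral_2_eq_2)
next
  case (Suc a')
  have st: "hf (a'+3) - hf (a'+2) \<le> hf (a'+2+b) - hf (a'+1+b)"
  proof (cases "b = 1")
    case True then show ?thesis by (simp add: numeral_3_eq_3 numeral_2_eq_2)
  next
    case False
    then have "gg (a'+2) < gg (a'+1+b)" using b by (intro gg_mono) auto
    then show ?thesis unfolding gg_def by (simp add: numeral_3_eq_3 numeral_2_eq_2 algebra_simps)
  qed
  have st2: "b \<ge> 2 \<Longrightarrow> hf (a'+3) - hf (a'+2) < hf (a'+2+b) - hf (a'+1+b)"
  proof -
    assume "b \<ge> 2"
    then have "gg (a'+2) < gg (a'+1+b)" by (intro gg_mono) auto
    then show ?thesis unfolding gg_def by (simp add: numeral_3_eq_3 numeral_2_eq_2 algebra_simps)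
  qed
  have e1: "Suc a' + 2 = a' + 3" "Suc a' + 1 + b = a' + 2 + b" by simp_all
  show ?case unfolding e1 using Suc.IH st st2 by linarith
qed

lemma opt:
  assumes "ls \<noteq> []" "\<forall>l\<in>set ls. l \<ge> 1"
  shows "sum_list (map (\<lambda>l. hf (Suc l)) ls) \<le> real (length ls - 1) * hf 2 + hf (sum_list ls - length ls + 2)
    \<and> (sum_list (map (\<lambda>l. hf (Suc l)) ls) = real (length ls - 1) * hf 2 + hf (sum_list ls - length ls + 2)
       \<longrightarrow> mset ls = replicate_mset (length ls - 1) 1 + {# sum_list ls - length ls + 1 #})"
  using assms
proof (induction ls)
  case Nil then show ?case by simp
next
  case (Cons l rest)
  show ?case
  proof (cases "rest = []")
    case True
    then show ?thesis using Cons.prems by (simp add: numeral_2_eq_2)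
  next
    case False
    have l1: "l \<ge> 1" using Cons.prems by simp
    have IH: "sum_list (map (\<lambda>l. hf (Suc l)) rest) \<le> real (length rest - 1) * hf 2 + hf (sum_list rest - length rest + 2)
      \<and> (sum_list (map (\<lambda>l. hf (Suc l)) rest) = real (length rest - 1) * hf 2 + hf (sum_list rest - length rest + 2)
       \<longrightarrow> mset rest = replicate_mset (length rest - 1) 1 + {# sum_list rest - length rest + 1 #})"
      using Cons.IH False Cons.prems by simp
    have sl: "sum_list rest \<ge> length rest"
      using Cons.prems by (induction rest) auto
    define t where "t = sum_list rest - length rest + 1"
    have t1: "t \<ge> 1" unfolding t_def by simp
    define R' where "R' = length rest"
    have R'1: "R' \<ge> 1" using False unfolding R'_def by (cases rest) auto
    have tv: "sum_list rest - length rest + 2 = t + 1" unfolding t_def by simp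
    have tw: "sum_list (l # rest) - length (l#rest) + 2 = (l - 1) + 1 + t"
      using sl l1 unfolding t_def by simp
    have tw2: "sum_list (l # rest) - length (l#rest) + 1 = (l - 1) + t"
      using sl l1 unfolding t_def by simp
    have TV: "hf ((l-1)+2) + hf (t+1) \<le> hf 2 + hf ((l-1)+1+t) \<and>
         ((l-1) \<ge> 1 \<and> t \<ge> 2 \<longrightarrow> hf ((l-1)+2) + hf (t+1) < hf 2 + hf ((l-1)+1+t))"
      using two_var[OF t1] by blast
    have ll: "(l-1)+2 = Suc l" using l1 by simp
    have lenr: "real (length (l#rest) - 1) = real (length rest - 1) + 1" using R'1 unfolding R'_def by simp
    have sumeq: "sum_list (map (\<lambda>l. hf (Suc l)) (l#rest)) = hf (Suc l) + sum_list (map (\<lambda>l. hf (Suc l)) rest)"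
      by simp
    show ?thesis
    proof (intro conjI impI)
      show "sum_list (map (\<lambda>l. hf (Suc l)) (l#rest)) \<le> real (length (l#rest) - 1) * hf 2 + hf (sum_list (l#rest) - length (l#rest) + 2)"
        unfolding sumeq tw lenr using IH TV ll tv by (simp add: algebra_simps)
    next
      assume eq: "sum_list (map (\<lambda>l. hf (Suc l)) (l#rest)) = real (length (l#rest) - 1) * hf 2 + hf (sum_list (l#rest) - length (l#rest) + 2)"
      have eqIH: "sum_list (map (\<lambda>l. hf (Suc l)) rest) = real (length rest - 1) * hf 2 + hf (sum_list rest - length rest + 2)"
        and eqTV: "\<not> ((l-1) \<ge> 1 \<and> t \<ge> 2)"
        using eq unfolding sumeq tw lenr using IH TV ll tv by (simp_all add: algebra_simps)
      have ms: "mset rest = replicate_mset (R' - 1) 1 + {# t #}" using IH eqIH unfolding t_def R'_def by simp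
      show "mset (l#rest) = replicate_mset (length (l#rest) - 1) 1 + {# sum_list (l#rest) - length (l#rest) + 1 #}"
        unfolding tw2
      proof (cases "l = 1")
        case True
        then show "mset (l#rest) = replicate_mset (length (l#rest) - 1) 1 + {# (l-1) + t #}"
          using ms R'1 unfolding R'_def by (cases "length rest") auto
      next
        case F: False
        then have "t = 1" using eqTV l1 t1 by arith
        then show "mset (l#rest) = replicate_mset (length (l#rest) - 1) 1 + {# (l-1) + t #}"
          using ms R'1 l1 unfolding R'_def by (cases "length rest") auto
      qed
    qed
  qed
qed


lemma runs_rep: "L \<ge> 1 \<Longrightarrow> runs (replicate L (0::nat)) = [replicate L 0]"
proof (induction L)
  case (Suc L) then show ?case by (cases L) auto
qed simp

lemma exists_skew: "L \<ge> 1 \<Longrightarrow> \<exists>z::nat list. set z \<subseteq> {0,1} \<and> length z = j + L \<and>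
   mset (map length (runs z)) = replicate_mset j 1 + {#L#}"
proof (induction j)
  case 0
  then show ?case by (intro exI[of _ "replicate L 0"]) (auto simp: runs_rep)
next
  case (Suc j)
  then obtain z :: "nat list" where z: "set z \<subseteq> {0,1}" "length z = j + L"
     "mset (map length (runs z)) = replicate_mset j 1 + {#L#}" by blast
  have zn: "z \<noteq> []" using z Suc.prems by auto
  define a where "a = 1 - hd z"
  obtain rs where r: "runs z = takeWhile (\<lambda>x. x = hd z) z # rs" using runs_hd[OF zn] by blast
  have h: "hd (takeWhile (\<lambda>x. x = hd z) z) = hd z" using zn by (cases z) auto
  have hz: "hd z \<in> {0,1}" using z zn hd_in_set by blast
  have ne: "hd z \<noteq> a" using hz unfolding a_def by auto
  have ra: "runs (a#z) = [a] # runs z" using r h ne by simp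
  show ?case
    apply (intro exI[of _ "a#z"])
    using z hz ra unfolding a_def by auto
qed

theorem lemma8:
  fixes q n m R :: nat
  assumes "q \<ge> 2" and "n \<ge> 2" and "m = n - 1" and "1 \<le> R" and "R \<le> m"
  shows "Min (H_in_1del q n ` seqs_runs q R m) =
           log 2 (real (n * q))
           - (real (m - R + 2) * log 2 (real (m - R + 2)) + 2 * real (R - 1)) / real (n * q)
     \<and> (\<forall>y\<in>seqs_runs q R m. H_in_1del q n y = Min (H_in_1del q n ` seqs_runs q R m)
           \<longrightarrow> skewed R y)"
proof -
  have nm: "n = Suc m" using assms by simp
  define N where "N = real (n * q)"
  have Npos: "N > 0" unfolding N_def using assms by simp
  define B where "B = real (R - 1) * hf 2 + hf (m - R + 2)"
  define V where "V = log 2 (real (n * q))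
           - (real (m - R + 2) * log 2 (real (m - R + 2)) + 2 * real (R - 1)) / real (n * q)"
  have hf2: "hf 2 = 2" unfolding hf_def by simp
  have VB: "V = log 2 N - B / N" unfolding V_def B_def N_def hf2
    by (simp add: hf_def algebra_simps)
  have Hy: "H_in_1del q n y = log 2 N - RS y / N" if "y \<in> seqs_runs q R m" for y
  proof -
    have "set y \<subseteq> {..<q}" "length y = m" using that unfolding seqs_runs_def seqs_def by auto
    then show ?thesis using H_formula[of y q] assms unfolding N_def nm by simp
  qed
  have RSls: "RS y = sum_list (map (\<lambda>l. hf (Suc l)) (map length (runs y)))" for y
    unfolding RS_def by (simp add: comp_def)
  have bound: "RS y \<le> B \<and> (RS y = B \<longrightarrow> skewed R y)" if y: "y \<in> seqs_runs q R m" for y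
  proof -
    define ls where "ls = map length (runs y)"
    have len: "length ls = R" "sum_list ls = m" "length y = m"
      using y runs_sum[of y] unfolding ls_def seqs_runs_def seqs_def by auto
    have ne: "ls \<noteq> []" using len assms by auto
    have pos: "\<forall>l\<in>set ls. l \<ge> 1" unfolding ls_def using runs_ne[of _ y]
      by (auto simp: Suc_le_eq)
    have O: "sum_list (map (\<lambda>l. hf (Suc l)) ls) \<le> B \<and>
       (sum_list (map (\<lambda>l. hf (Suc l)) ls) = B \<longrightarrow> mset ls = replicate_mset (R - 1) 1 + {# m - R + 1 #})"
      using opt[OF ne pos] unfolding len B_def by simp
    have "m - R + 1 = length y - (R - 1)" using len assms by simp
    then show ?thesis using O unfolding RSls ls_def[symmetric] skewed_def by simp
  qed
  have skB: "RS y = B" if y: "y \<in> seqs_runs q R m" "skewed R y" for y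
  proof -
    have len: "length y = m" using y unfolding seqs_runs_def seqs_def by auto
    have "RS y = sum_mset (image_mset (\<lambda>l. hf (Suc l)) (mset (map length (runs y))))"
      unfolding RSls by (metis mset_map sum_mset_sum_list)
    also have "\<dots> = real (R - 1) * hf (Suc 1) + hf (Suc (m - (R - 1)))"
      using y(2) len unfolding skewed_def by simp
    also have "\<dots> = B" unfolding B_def
    proof -
      have "Suc (m - (R - 1)) = m - R + 2" using assms by arith
      moreover have "hf (Suc 1) = hf 2" by (simp add: numeral_2_eq_2)
      ultimately show "real (R - 1) * hf (Suc 1) + hf (Suc (m - (R - 1))) = real (R - 1) * hf 2 + hf (m - R + 2)"
        by simp
    qed
    finally show ?thesis .
  qed
  obtain z :: "nat list" where z: "set z \<subseteq> {0,1}" "length z = (R-1) + (m - R + 1)"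
     "mset (map length (runs z)) = replicate_mset (R-1) 1 + {#m - R + 1#}"
    using exists_skew[of "m - R + 1" "R - 1"] by auto
  have zin: "z \<in> seqs_runs q R m"
  proof -
    have "length (runs z) = R" using arg_cong[OF z(3), of size] assms by simp
    moreover have "set z \<subseteq> {..<q}" using z(1) assms by auto
    ultimately show ?thesis using z(2) assms unfolding seqs_runs_def seqs_def by auto
  qed
  have zsk: "skewed R z" unfolding skewed_def using z assms by simp
  have fin: "finite (seqs_runs q R m)" unfolding seqs_runs_def using finite_seqs
    by (rule finite_subset[rotated]) auto
  have MinV: "Min (H_in_1del q n ` seqs_runs q R m) = V"
  proof (rule Min_eqI)
    show "finite (H_in_1del q n ` seqs_runs q R m)" using fin by simp
  next
    fix h assume "h \<in> H_in_1del q n ` seqs_runs q R m"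
    then obtain y where y: "y \<in> seqs_runs q R m" "h = H_in_1del q n y" by auto
    have "RS y \<le> B" using bound[OF y(1)] by simp
    then have "RS y / N \<le> B / N" using Npos by (simp add: divide_right_mono)
    then show "V \<le> h" unfolding VB y(2) Hy[OF y(1)] by simp
  next
    show "V \<in> H_in_1del q n ` seqs_runs q R m"
      using zin Hy[OF zin] skB[OF zin zsk] VB by force
  qed
  show ?thesis
  proof
    show "Min (H_in_1del q n ` seqs_runs q R m) = log 2 (real (n * q))
           - (real (m - R + 2) * log 2 (real (m - R + 2)) + 2 * real (R - 1)) / real (n * q)"
      using MinV unfolding V_def .
  next
    show "\<forall>y\<in>seqs_runs q R m. H_in_1del q n y = Min (H_in_1del q n ` seqs_runs q R m) \<longrightarrow> skewed R y"
    proof (intro ballI impI)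
      fix y assume y: "y \<in> seqs_runs q R m" and e: "H_in_1del q n y = Min (H_in_1del q n ` seqs_runs q R m)"
      have "RS y / N = B / N" using e unfolding MinV VB Hy[OF y] by simp
      then have "RS y = B" using Npos by simp
      then show "skewed R y" using bound[OF y] by simp
    qed
  qed
qed

end
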